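(* Let $D\ge2$. (a) There exist constants $c,C'>0$ depending only on $D$ such that: if $0<\varepsilon<c$, $\Phi:\mathbb R^D\to\mathbb R^D$ is an $\varepsilon$-distorted diffeomorphism, $z\in\mathbb R^D$ and $r>0$, then there exists a Euclidean motion $A$ such that $|\Phi(x)-A(x)|\leq C'\varepsilon r$ for all $x\in B(z,r)$, and moreover $A$ is proper if and only if $\Phi$ is proper. (b) There exist constants $c_0,c'>0$ depending only on $D$ such that: let $0<\delta<c_0$, let $\Phi:\mathbb R^D\to\mathbb R^D$ be a $\delta$-distorted diffeomorphism, let $0<\eta<1$ and let $x_0,\dots,x_D\in\mathbb R^D$ with $\mathrm{diam}\{x_0,\dots,x_D\}\leq 1$ and $V_D(x_0,\dots,x_D)\geq\eta^D$, and suppose $0<\delta<c'\eta^D$. Let $T$ be the unique affine map with $T(x_i)=\Phi(x_i)$ for $i=0,\dots,D$. Then $\Phi$ is proper if and only if $T$ is proper.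
   Context: $B(z,r)$ is the open ball of center $z$ and radius $r$. A Euclidean motion is $x\mapsto Tx+x_0$ with $T\in O(D)$; proper if $\det T=1$. An affine map $x\mapsto Lx+b$ is proper if $\det L>0$. An $\varepsilon$-distorted diffeomorphism is a diffeomorphism $\Phi$ of $\mathbb R^D$ onto $\mathbb R^D$ with $(1+\varepsilon)^{-1}I\leq(\nabla\Phi(x))^T\nabla\Phi(x)\leq(1+\varepsilon)I$ for all $x$; it is proper if $\det\nabla\Phi>0$ everywhere and improper if $\det\nabla\Phi<0$ everywhere. $V_D(x_0,\dots,x_D)$ is the $D$-dimensional volume of the simplex with vertices $x_0,\dots,x_D$. *)

theory Defs
  imports "HOL-Analysis.Analysis"
begin

definition jac :: "(real^'n \<Rightarrow> real^'n) \<Rightarrow> real^'n \<Rightarrow> real^'n^'n" where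
  "jac \<Phi> x = matrix (frechet_derivative \<Phi> (at x))"

definition diffeo :: "(real^'n \<Rightarrow> real^'n) \<Rightarrow> bool" where
  "diffeo \<Phi> \<longleftrightarrow> bij \<Phi>
     \<and> (\<forall>x. \<Phi> differentiable at x) \<and> continuous_on UNIV (jac \<Phi>)
     \<and> (\<forall>y. inv \<Phi> differentiable at y) \<and> continuous_on UNIV (jac (inv \<Phi>))"

definition distorted_diffeo :: "real \<Rightarrow> (real^'n \<Rightarrow> real^'n) \<Rightarrow> bool" where
  "distorted_diffeo \<epsilon> \<Phi> \<longleftrightarrow> diffeo \<Phi> \<and>
     (\<forall>x v. inverse (1 + \<epsilon>) * (v \<bullet> v) \<le> v \<bullet> ((transpose (jac \<Phi> x) ** jac \<Phi> x) *v v)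
          \<and> v \<bullet> ((transpose (jac \<Phi> x) ** jac \<Phi> x) *v v) \<le> (1 + \<epsilon>) * (v \<bullet> v))"

definition proper_diffeo :: "(real^'n \<Rightarrow> real^'n) \<Rightarrow> bool" where
  "proper_diffeo \<Phi> \<longleftrightarrow> (\<forall>x. det (jac \<Phi> x) > 0)"

definition euclidean_motion :: "(real^'n \<Rightarrow> real^'n) \<Rightarrow> bool" where
  "euclidean_motion A \<longleftrightarrow> (\<exists>T x0. orthogonal_matrix T \<and> (\<forall>x. A x = T *v x + x0))"

definition proper_motion :: "(real^'n \<Rightarrow> real^'n) \<Rightarrow> bool" where
  "proper_motion A \<longleftrightarrow> (\<exists>T x0. orthogonal_matrix T \<and> det T = 1 \<and> (\<forall>x. A x = T *v x + x0))"

definition simplex_vol :: "(nat \<Rightarrow> real^'n) \<Rightarrow> real" where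
  "simplex_vol xs = measure lebesgue (convex hull (xs ` {0..CARD('n)}))"

end

theory Submission
  imports Defs
begin


lemma jac_quad: "v \<bullet> ((transpose J ** J) *v v) = (J *v v) \<bullet> (J *v (v::real^'n))"
proof -
  have "v \<bullet> ((transpose J ** J) *v v) = v \<bullet> ((J *v v) v* J)"
    by (simp add: matrix_vector_mul_assoc[symmetric])
  also have "\<dots> = ((J *v v) v* J) \<bullet> v" by (simp add: inner_commute)
  also have "\<dots> = (J *v v) \<bullet> (J *v v)" by (simp add: dot_lmul_matrix)
  finally show ?thesis .
qed

lemma diffeo_deriv:
  assumes "diffeo \<Phi>"
  shows "(\<Phi> has_derivative (\<lambda>v. jac \<Phi> x *v v)) (at x)"
proof -
  have d: "\<Phi> differentiable at x" using assms unfolding diffeo_def by blast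
  then have h: "(\<Phi> has_derivative frechet_derivative \<Phi> (at x)) (at x)"
    using frechet_derivative_works by blast
  then have "linear (frechet_derivative \<Phi> (at x))"
    using has_derivative_linear by blast
  then have "(\<lambda>v. jac \<Phi> x *v v) = frechet_derivative \<Phi> (at x)"
    unfolding jac_def by (simp add: matrix_works)
  with h show ?thesis by simp
qed

lemma dist_jac_bounds:
  assumes "distorted_diffeo \<epsilon> \<Phi>"
  shows "inverse (1+\<epsilon>) * (norm v)^2 \<le> (norm (jac \<Phi> x *v v))^2"
    and "(norm (jac \<Phi> x *v v))^2 \<le> (1+\<epsilon>) * (norm v)^2"
  using assms unfolding distorted_diffeo_def jac_quad
  by (auto simp: power2_norm_eq_inner)



lemma norm_jac_le:
  assumes "distorted_diffeo \<epsilon> \<Phi>" "\<epsilon> > 0"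
  shows "norm (jac \<Phi> x *v v) \<le> sqrt (1+\<epsilon>) * norm v"
proof -
  have "norm (jac \<Phi> x *v v) = sqrt ((norm (jac \<Phi> x *v v))^2)" by simp
  also have "\<dots> \<le> sqrt ((1+\<epsilon>) * (norm v)^2)"
    using dist_jac_bounds(2)[OF assms(1)] real_sqrt_le_mono by blast
  also have "\<dots> = sqrt (1+\<epsilon>) * norm v" by (simp add: real_sqrt_mult)
  finally show ?thesis .
qed

lemma norm_jac_ge:
  assumes "distorted_diffeo \<epsilon> \<Phi>" "\<epsilon> > 0"
  shows "norm v \<le> sqrt (1+\<epsilon>) * norm (jac \<Phi> x *v v)"
proof -
  have "(norm v)^2 \<le> (1+\<epsilon>) * (norm (jac \<Phi> x *v v))^2"
    using dist_jac_bounds(1)[OF assms(1), of v x] assms(2)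
    by (simp add: field_simps)
  then have "sqrt ((norm v)^2) \<le> sqrt ((1+\<epsilon>) * (norm (jac \<Phi> x *v v))^2)"
    using real_sqrt_le_mono by blast
  then show ?thesis by (simp add: real_sqrt_mult)
qed

lemma lip_upper:
  assumes "distorted_diffeo \<epsilon> \<Phi>" "\<epsilon> > 0"
  shows "norm (\<Phi> x - \<Phi> y) \<le> sqrt (1+\<epsilon>) * norm (x - y)"
proof (rule differentiable_bound[where S=UNIV and f'="\<lambda>x v. jac \<Phi> x *v v"])
  fix x :: "real^'a"
  show "(\<Phi> has_derivative (*v) (jac \<Phi> x)) (at x within UNIV)"
    using diffeo_deriv assms(1) unfolding distorted_diffeo_def by blast
  show "onorm ((*v) (jac \<Phi> x)) \<le> sqrt (1 + \<epsilon>)"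
    by (rule onorm_le) (use norm_jac_le[OF assms] in auto)
qed auto

lemma lip_lower:
  assumes "distorted_diffeo \<epsilon> \<Phi>" "\<epsilon> > 0"
  shows "norm (x - y) \<le> sqrt (1+\<epsilon>) * norm (\<Phi> x - \<Phi> y)"
proof -
  have df: "diffeo \<Phi>" using assms(1) unfolding distorted_diffeo_def by blast
  then have bj: "bij \<Phi>" unfolding diffeo_def by blast
  define G where "G = inv \<Phi>"
  have GF: "\<And>x. G (\<Phi> x) = x" unfolding G_def using bj by (simp add: bij_is_inj)
  have FG: "\<And>y. \<Phi> (G y) = y" unfolding G_def using bj by (simp add: bij_is_surj surj_f_inv_f)
  have Gd: "\<And>y. G differentiable at y" using df unfolding diffeo_def G_def by blast
  have bnd: "norm (frechet_derivative G (at y) w) \<le> sqrt (1+\<epsilon>) * norm w" for y w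
  proof -
    let ?G' = "frechet_derivative G (at y)"
    have hG: "(G has_derivative ?G') (at y)" using Gd frechet_derivative_works by blast
    have hF: "(\<Phi> has_derivative (*v) (jac \<Phi> (G y))) (at (G y))" using diffeo_deriv[OF df] .
    have "((\<Phi> \<circ> G) has_derivative ((*v) (jac \<Phi> (G y)) \<circ> ?G')) (at y)"
      by (rule diff_chain_at[OF hG hF])
    moreover have "\<Phi> \<circ> G = id" using FG by auto
    ultimately have "((*v) (jac \<Phi> (G y)) \<circ> ?G') = id"
      using has_derivative_unique has_derivative_id by metis
    then have "jac \<Phi> (G y) *v ?G' w = w" by (metis comp_apply id_apply)
    then show ?thesis using norm_jac_ge[OF assms, of "?G' w" "G y"] by simp
  qed
  have "norm (G (\<Phi> x) - G (\<Phi> y)) \<le> sqrt (1+\<epsilon>) * norm (\<Phi> x - \<Phi> y)"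
  proof (rule differentiable_bound[where S=UNIV and f'="\<lambda>y. frechet_derivative G (at y)"])
    fix y :: "real^'a"
    show "(G has_derivative frechet_derivative G (at y)) (at y within UNIV)"
      using Gd frechet_derivative_works by blast
    show "onorm (frechet_derivative G (at y)) \<le> sqrt (1 + \<epsilon>)"
      by (rule onorm_le) (use bnd in auto)
  qed auto
  then show ?thesis by (simp add: GF)
qed

lemma sqdist_bound:
  assumes "distorted_diffeo \<epsilon> \<Phi>" "\<epsilon> > 0"
  shows "\<bar>(norm (\<Phi> x - \<Phi> y))^2 - (norm (x - y))^2\<bar> \<le> \<epsilon> * (norm (x - y))^2"
proof -
  let ?a = "norm (\<Phi> x - \<Phi> y)" and ?b = "norm (x - y)"
  have u: "?a^2 \<le> (1+\<epsilon>) * ?b^2"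
  proof -
    have "?a^2 \<le> (sqrt (1+\<epsilon>) * ?b)^2"
      using lip_upper[OF assms, of x y] by (simp add: power_mono)
    then show ?thesis using assms(2) by (simp add: power_mult_distrib)
  qed
  have l: "?b^2 \<le> (1+\<epsilon>) * ?a^2"
  proof -
    have "?b^2 \<le> (sqrt (1+\<epsilon>) * ?a)^2"
      using lip_lower[OF assms, of x y] by (simp add: power_mono)
    then show ?thesis using assms(2) by (simp add: power_mult_distrib)
  qed
  have "?b^2 - \<epsilon> * ?b^2 \<le> ?a^2"
  proof -
    have "?b^2 - \<epsilon> * ?b^2 \<le> (?b^2) / (1+\<epsilon>)"
      using assms(2) by (simp add: field_simps)
    also have "\<dots> \<le> ?a^2" using l assms(2) by (simp add: field_simps)
    finally show ?thesis .
  qed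
  with u show ?thesis by (simp add: abs_le_iff algebra_simps)
qed



lemma polar_id: "(p::'a::real_inner) \<bullet> q = ((norm p)^2 + (norm q)^2 - (norm (p - q))^2) / 2"
  by (simp add: power2_norm_eq_inner inner_diff_left inner_diff_right inner_commute)

lemma polar:
  assumes "distorted_diffeo \<epsilon> \<Phi>" "\<epsilon> > 0" "norm a \<le> r" "norm b \<le> r"
  shows "\<bar>(\<Phi> (z+a) - \<Phi> z) \<bullet> (\<Phi> (z+b) - \<Phi> z) - a \<bullet> b\<bar> \<le> 3 * \<epsilon> * r^2"
proof -
  have r: "r \<ge> 0" using assms(3) norm_ge_zero order_trans by blast
  have e1: "\<bar>(norm (\<Phi> (z+a) - \<Phi> z))^2 - (norm a)^2\<bar> \<le> \<epsilon> * r^2"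
  proof -
    have "\<bar>(norm (\<Phi> (z+a) - \<Phi> z))^2 - (norm a)^2\<bar> \<le> \<epsilon> * (norm a)^2"
      using sqdist_bound[OF assms(1,2), of "z+a" z] by simp
    also have "\<dots> \<le> \<epsilon> * r^2" using assms power_mono[OF _ norm_ge_zero] by (simp add: mult_left_mono)
    finally show ?thesis .
  qed
  have e2: "\<bar>(norm (\<Phi> (z+b) - \<Phi> z))^2 - (norm b)^2\<bar> \<le> \<epsilon> * r^2"
  proof -
    have "\<bar>(norm (\<Phi> (z+b) - \<Phi> z))^2 - (norm b)^2\<bar> \<le> \<epsilon> * (norm b)^2"
      using sqdist_bound[OF assms(1,2), of "z+b" z] by simp
    also have "\<dots> \<le> \<epsilon> * r^2" using assms power_mono[OF _ norm_ge_zero] by (simp add: mult_left_mono)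
    finally show ?thesis .
  qed
  have e3: "\<bar>(norm (\<Phi> (z+a) - \<Phi> (z+b)))^2 - (norm (a-b))^2\<bar> \<le> \<epsilon> * (4*r^2)"
  proof -
    have "\<bar>(norm (\<Phi> (z+a) - \<Phi> (z+b)))^2 - (norm (a-b))^2\<bar> \<le> \<epsilon> * (norm (a-b))^2"
      using sqdist_bound[OF assms(1,2), of "z+a" "z+b"] by simp
    also have "\<dots> \<le> \<epsilon> * (4*r^2)"
    proof -
      have "norm (a-b) \<le> 2*r" using assms(3,4) norm_triangle_ineq4[of a b] by simp
      then have "(norm (a-b))^2 \<le> (2*r)^2" using power_mono norm_ge_zero by blast
      then show ?thesis using assms(2) by (simp add: mult_left_mono power_mult_distrib)
    qed
    finally show ?thesis .
  qed
  have "(\<Phi> (z+a) - \<Phi> z) \<bullet> (\<Phi> (z+b) - \<Phi> z) =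
     ((norm (\<Phi> (z+a) - \<Phi> z))^2 + (norm (\<Phi> (z+b) - \<Phi> z))^2 - (norm (\<Phi> (z+a) - \<Phi> (z+b)))^2)/2"
    by (subst polar_id) simp
  moreover have "a \<bullet> b = ((norm a)^2 + (norm b)^2 - (norm (a-b))^2)/2" by (rule polar_id)
  ultimately show ?thesis using e1 e2 e3 by (simp add: abs_le_iff)
qed



fun gsc :: "nat \<Rightarrow> real" where
  "gsc 0 = 0"
| "gsc (Suc k) = 2 * real k * (1 + 2 * gsc k) + 1"

lemma gsc_nonneg: "gsc k \<ge> 0"
  by (induction k) auto

lemma gsc_Suc_ge: "gsc k \<le> gsc (Suc k)"
proof (cases k)
  case 0 then show ?thesis by simp
next
  case (Suc m)
  have k1: "real k \<ge> 1" using Suc by simp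
  have "2 * (1 + 2 * gsc k) \<le> 2 * real k * (1 + 2 * gsc k)"
  proof -
    have "1 * (1 + 2 * gsc k) \<le> real k * (1 + 2 * gsc k)"
      using k1 gsc_nonneg[of k] by (intro mult_right_mono) auto
    then show ?thesis by simp
  qed
  moreover have "gsc k \<le> 2 * (1 + 2 * gsc k)" using gsc_nonneg[of k] by (simp add: algebra_simps)
  ultimately have "gsc k \<le> 2 * real k * (1 + 2 * gsc k)" by (rule order_trans[rotated])
  then have "gsc k \<le> 2 * real k * (1 + 2 * gsc k) + 1" by simp
  then show ?thesis by simp
qed

lemma gsc_mono: "k \<le> m \<Longrightarrow> gsc k \<le> gsc m"
  using gsc_Suc_ge by (rule lift_Suc_mono_le)

lemma gsc_Suc_ge1: "gsc (Suc k) \<ge> 1"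
  using gsc_nonneg[of k] by simp

lemma gram_schmidt_approx:
  fixes u :: "'i \<Rightarrow> 'a::real_inner"
  assumes "finite S"
  shows "\<eta> \<ge> 0 \<Longrightarrow> gsc (card S) * \<eta> \<le> 1/2 \<Longrightarrow>
    (\<forall>i\<in>S. \<forall>j\<in>S. \<bar>u i \<bullet> u j - (if i = j then 1 else 0)\<bar> \<le> \<eta>) \<Longrightarrow>
    \<exists>f. (\<forall>i\<in>S. \<forall>j\<in>S. f i \<bullet> f j = (if i = j then 1 else 0)) \<and>
        (\<forall>i\<in>S. norm (f i - u i) \<le> gsc (card S) * \<eta>)"
  using assms
proof (induction S rule: finite_induct)
  case empty
  then show ?case by auto
next
  case (insert i S)
  define k where "k = card S"
  define C where "C = gsc k"
  have cardi: "card (insert i S) = Suc k" using insert k_def by simp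
  have C0: "C \<ge> 0" unfolding C_def by (rule gsc_nonneg)
  have small: "gsc (Suc k) * \<eta> \<le> 1/2" using insert(5) cardi by simp
  have eta: "\<eta> \<le> 1/2"
  proof -
    have "1 * \<eta> \<le> gsc (Suc k) * \<eta>" using gsc_Suc_ge1[of k] insert(4) by (rule mult_right_mono)
    then show ?thesis using small by linarith
  qed
  have "gsc k * \<eta> \<le> gsc (Suc k) * \<eta>" using gsc_Suc_ge insert(4) mult_right_mono by blast
  then have "gsc (card S) * \<eta> \<le> 1/2" using small k_def by simp
  then obtain f where forth: "\<forall>i\<in>S. \<forall>j\<in>S. f i \<bullet> f j = (if i = j then 1 else 0)"
      and fclose: "\<forall>i\<in>S. norm (f i - u i) \<le> C * \<eta>"
    using insert(3)[OF insert(4)] insert(6) C_def k_def by auto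
  define v where "v = u i"
  have vv: "\<bar>v \<bullet> v - 1\<bar> \<le> \<eta>" using insert(6) v_def by auto
  have nv2: "\<bar>(norm v)^2 - 1\<bar> \<le> \<eta>" using vv by (simp add: power2_norm_eq_inner)
  have nv1: "\<bar>norm v - 1\<bar> \<le> \<eta>"
  proof -
    have "(norm v)^2 - 1 = (norm v - 1) * (norm v + 1)" by (simp add: algebra_simps power2_eq_square)
    then have "\<bar>norm v - 1\<bar> * (norm v + 1) \<le> \<eta>" using nv2 by (simp add: abs_mult)
    moreover have "\<bar>norm v - 1\<bar> \<le> \<bar>norm v - 1\<bar> * (norm v + 1)"
      by (simp add: mult_le_cancel_left1)
    ultimately show ?thesis by linarith
  qed
  have nv: "norm v \<le> 2" using nv1 eta by linarith
  have vf: "\<bar>v \<bullet> f j\<bar> \<le> (1 + 2*C) * \<eta>" if j: "j \<in> S" for j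
  proof -
    have ij: "i \<noteq> j" using j insert(2) by auto
    have "v \<bullet> f j = v \<bullet> u j + v \<bullet> (f j - u j)" by (simp add: inner_diff_right)
    moreover have "\<bar>v \<bullet> u j\<bar> \<le> \<eta>" using insert(6) j ij v_def by force
    moreover have "\<bar>v \<bullet> (f j - u j)\<bar> \<le> 2 * (C * \<eta>)"
    proof -
      have "\<bar>v \<bullet> (f j - u j)\<bar> \<le> norm v * norm (f j - u j)" by (rule Cauchy_Schwarz_ineq2)
      also have "\<dots> \<le> 2 * (C * \<eta>)"
        using nv fclose j by (intro mult_mono) auto
      finally show ?thesis .
    qed
    ultimately show ?thesis by (simp add: algebra_simps)
  qed
  define p where "p = (\<Sum>j\<in>S. (v \<bullet> f j) *\<^sub>R f j)"
  define a where "a = real k * ((1 + 2*C) * \<eta>)"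
  have nf: "norm (f j) = 1" if "j \<in> S" for j
    using forth that by (simp add: norm_eq_1)
  have np: "norm p \<le> a"
  proof -
    have "norm p \<le> (\<Sum>j\<in>S. norm ((v \<bullet> f j) *\<^sub>R f j))" unfolding p_def by (rule norm_sum)
    also have "\<dots> = (\<Sum>j\<in>S. \<bar>v \<bullet> f j\<bar>)" using nf by (intro sum.cong) auto
    also have "\<dots> \<le> (\<Sum>j\<in>S. (1 + 2*C) * \<eta>)" using vf by (intro sum_mono) auto
    also have "\<dots> = a" unfolding a_def k_def by simp
    finally show ?thesis .
  qed
  define g where "g = v - p"
  have gf: "g \<bullet> f l = 0" if l: "l \<in> S" for l
  proof -
    have "p \<bullet> f l = (\<Sum>j\<in>S. (v \<bullet> f j) * (f j \<bullet> f l))"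
      unfolding p_def by (simp add: inner_sum_left)
    also have "\<dots> = (\<Sum>j\<in>S. if j = l then v \<bullet> f j else 0)"
      using forth l by (intro sum.cong) auto
    also have "\<dots> = v \<bullet> f l" using l insert(1) by simp
    finally show ?thesis unfolding g_def by (simp add: inner_diff_left)
  qed
  have aeta: "a + \<eta> \<le> 1/2"
  proof -
    have a0: "a \<ge> 0" unfolding a_def using C0 insert(4) by simp
    have "gsc (Suc k) * \<eta> = 2 * a + \<eta>" unfolding a_def C_def by (simp add: algebra_simps)
    then have "a + \<eta> \<le> gsc (Suc k) * \<eta>" using a0 by linarith
    with small show ?thesis by linarith
  qed
  have ng1: "\<bar>norm g - 1\<bar> \<le> a + \<eta>"
  proof -
    have "\<bar>norm g - norm v\<bar> \<le> norm p"
      unfolding g_def using norm_triangle_ineq3[of "v - p" v] by simp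
    then show ?thesis using np nv1 by linarith
  qed
  then have gpos: "norm g > 0" using aeta by linarith
  define w where "w = g /\<^sub>R norm g"
  have nw: "norm w = 1" using gpos unfolding w_def by simp
  have wf: "w \<bullet> f l = 0" if "l \<in> S" for l
    using gf[OF that] unfolding w_def by simp
  have wv: "norm (w - v) \<le> gsc (Suc k) * \<eta>"
  proof -
    have "w - g = (1 / norm g - 1) *\<^sub>R g" unfolding w_def by (simp add: algebra_simps divide_inverse)
    then have "norm (w - g) = \<bar>1 / norm g - 1\<bar> * norm g" by simp
    also have "\<dots> = \<bar>(1 / norm g - 1) * norm g\<bar>" using gpos by (simp add: abs_mult)
    also have "(1 / norm g - 1) * norm g = 1 - norm g" using gpos by (simp add: field_simps)
    finally have wg: "norm (w - g) \<le> a + \<eta>" using ng1 by simp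
    have "norm (w - v) \<le> norm (w - g) + norm (g - v)"
      by (metis add_diff_eq diff_add_cancel norm_triangle_ineq)
    also have "norm (g - v) = norm p" unfolding g_def by (simp add: norm_minus_commute)
    finally have "norm (w - v) \<le> 2 * a + \<eta>" using wg np by linarith
    also have "\<dots> = gsc (Suc k) * \<eta>" unfolding a_def C_def by (simp add: algebra_simps)
    finally show ?thesis .
  qed
  define f' where "f' = f(i := w)"
  show ?case
  proof (intro exI[of _ f'] conjI ballI)
    fix j l assume j: "j \<in> insert i S" and l: "l \<in> insert i S"
    show "f' j \<bullet> f' l = (if j = l then 1 else 0)"
    proof (cases "j = i")
      case True
      then show ?thesis
      proof (cases "l = i")
        case True
        then show ?thesis using \<open>j = i\<close> nw unfolding f'_def by (simp add: norm_eq_1[symmetric])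
      next
        case False
        then have "l \<in> S" using l by auto
        then show ?thesis using \<open>j = i\<close> False wf unfolding f'_def by simp
      qed
    next
      case False
      then have jS: "j \<in> S" using j by auto
      then show ?thesis
      proof (cases "l = i")
        case True
        then show ?thesis using jS False wf unfolding f'_def by (simp add: inner_commute)
      next
        case False
        then have "l \<in> S" using l by auto
        then show ?thesis using jS \<open>j \<noteq> i\<close> False forth unfolding f'_def by simp
      qed
    qed
  next
    fix j assume j: "j \<in> insert i S"
    show "norm (f' j - u j) \<le> gsc (card (insert i S)) * \<eta>"
    proof (cases "j = i")
      case True
      then show ?thesis using wv cardi unfolding f'_def v_def by simp
    next
      case False
      then have "j \<in> S" using j by auto
      then have "norm (f' j - u j) \<le> C * \<eta>" using fclose False unfolding f'_def by simp
      also have "\<dots> \<le> gsc (Suc k) * \<eta>" unfolding C_def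
        using gsc_Suc_ge insert(4) mult_right_mono by blast
      finally show ?thesis using cardi by simp
    qed
  qed
qed



definition colmat :: "('n \<Rightarrow> real^'n) \<Rightarrow> real^'n^'n" where
  "colmat f = (\<chi> k i. f i $ k)"

lemma column_colmat [simp]: "column i (colmat f) = f i"
  unfolding colmat_def column_def by (simp add: vec_eq_iff)

lemma colmat_mult: "colmat f *v w = (\<Sum>i\<in>UNIV. w $ i *\<^sub>R f i)"
  by (simp add: matrix_mult_sum scalar_mult_eq_scaleR)

lemma transpose_colmat_mult: "(transpose (colmat f) *v y) $ i = f i \<bullet> y"
  unfolding colmat_def transpose_def
  by (simp add: matrix_vector_mult_def inner_vec_def mult.commute)

lemma orth_colmat:
  assumes "\<forall>i j. f i \<bullet> f j = (if i = j then 1 else 0)"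
  shows "orthogonal_matrix (colmat f)"
  unfolding orthogonal_matrix_orthonormal_columns
  using assms by (auto simp: norm_eq_1 orthogonal_def)

lemma orth_norm:
  assumes "orthogonal_matrix Q"
  shows "norm (Q *v v) = norm (v::real^'n)"
proof -
  have "(Q *v v) \<bullet> (Q *v v) = v \<bullet> v"
    using jac_quad[of v Q] assms unfolding orthogonal_matrix_def by simp
  then show ?thesis by (simp add: norm_eq_sqrt_inner)
qed

lemma orth_transpose_mult:
  assumes "orthogonal_matrix Q"
  shows "transpose Q *v (Q *v v) = v"
  using assms unfolding orthogonal_matrix_def
  by (simp add: matrix_vector_mul_assoc)

lemma sum_abs_comp_le: "(\<Sum>i\<in>UNIV. \<bar>(v::real^'n) $ i\<bar>) \<le> real CARD('n) * norm v"
proof -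
  have "(\<Sum>i\<in>UNIV. \<bar>v $ i\<bar>) \<le> (\<Sum>i\<in>(UNIV::'n set). norm v)"
    by (intro sum_mono) (rule component_le_norm_cart)
  then show ?thesis by simp
qed

lemma near_orth_inj:
  fixes P :: "real^'n^'n"
  assumes orth: "\<forall>i j. f i \<bullet> f j = (if i = j then 1 else 0)"
    and cl: "\<forall>i. norm (column i P - f i) \<le> \<beta>"
    and sm: "\<beta> * real CARD('n) < 1"
  shows "norm v - \<beta> * real CARD('n) * norm v \<le> norm (P *v v)"
proof -
  have Q: "orthogonal_matrix (colmat f)" by (rule orth_colmat[OF orth])
  have "P *v v - colmat f *v v = (\<Sum>i\<in>UNIV. v $ i *\<^sub>R (column i P - f i))"
    by (simp add: matrix_mult_sum scalar_mult_eq_scaleR colmat_mult sum_subtractf[symmetric]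
        scaleR_diff_right)
  then have "norm (P *v v - colmat f *v v) \<le> (\<Sum>i\<in>UNIV. norm (v $ i *\<^sub>R (column i P - f i)))"
    by (metis norm_sum)
  also have "\<dots> \<le> (\<Sum>i\<in>UNIV. \<bar>v $ i\<bar> * \<beta>)"
    using cl by (intro sum_mono) (simp add: mult_left_mono)
  also have "\<dots> = \<beta> * (\<Sum>i\<in>UNIV. \<bar>v $ i\<bar>)" by (simp add: sum_distrib_left mult.commute)
  also have "\<dots> \<le> \<beta> * (real CARD('n) * norm v)"
  proof -
    have "\<beta> \<ge> 0" using cl norm_ge_zero order_trans by blast
    then show ?thesis using sum_abs_comp_le mult_left_mono by blast
  qed
  finally have "norm (P *v v - colmat f *v v) \<le> \<beta> * real CARD('n) * norm v" by simp
  moreover have "norm (colmat f *v v) = norm v" by (rule orth_norm[OF Q])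
  moreover have "norm (colmat f *v v) \<le> norm (P *v v) + norm (P *v v - colmat f *v v)"
    by (metis add_diff_cancel_left' diff_add_cancel norm_triangle_ineq4 norm_minus_commute order_trans
        norm_triangle_ineq)
  ultimately show ?thesis by linarith
qed

lemma near_orth_det:
  fixes P :: "real^'n^'n"
  assumes orth: "\<forall>i j. f i \<bullet> f j = (if i = j then 1 else 0)"
    and cl: "\<forall>i. norm (column i P - f i) \<le> \<beta>"
    and sm: "\<beta> * real CARD('n) < 1"
  shows "det P \<noteq> 0"
proof -
  have "inj ((*v) P)"
  proof (rule linear_injective_0[THEN iffD2])
    show "linear ((*v) P)" by simp
    show "\<forall>x. P *v x = 0 \<longrightarrow> x = 0"
    proof (intro allI impI)
      fix x assume "P *v x = 0"
      then have "norm x - \<beta> * real CARD('n) * norm x \<le> 0"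
        using near_orth_inj[OF orth cl sm, of x] by simp
      then have "norm x * (1 - \<beta> * real CARD('n)) \<le> 0" by (simp add: algebra_simps)
      then have "norm x \<le> 0" using sm by (simp add: mult_le_0_iff)
      then show "x = 0" by simp
    qed
  qed
  then show ?thesis using det_nz_iff_inj[of "(*v) P"] by simp
qed

lemma tendsto_det:
  fixes F :: "'a \<Rightarrow> real^'n^'n"
  assumes "\<And>i j. ((\<lambda>x. F x $ i $ j) \<longlongrightarrow> A $ i $ j) net"
  shows "((\<lambda>x. det (F x)) \<longlongrightarrow> det A) net"
  unfolding det_def
  by (intro tendsto_intros assms)

lemma continuous_on_det:
  fixes F :: "'a::topological_space \<Rightarrow> real^'n^'n"
  assumes "continuous_on S F"
  shows "continuous_on S (\<lambda>x. det (F x))"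
  unfolding continuous_on_def
proof
  fix x assume "x \<in> S"
  then have "(F \<longlongrightarrow> F x) (at x within S)" using assms unfolding continuous_on_def by blast
  then show "((\<lambda>x. det (F x)) \<longlongrightarrow> det (F x)) (at x within S)"
    by (intro tendsto_det tendsto_vec_nth)
qed

lemma sign_const:
  fixes g :: "real \<Rightarrow> real"
  assumes "a \<le> b" "continuous_on {a..b} g" "\<forall>t\<in>{a..b}. g t \<noteq> 0"
  shows "g a > 0 \<longleftrightarrow> g b > 0"
proof
  assume ga: "g a > 0"
  show "g b > 0"
  proof (rule ccontr)
    assume "\<not> g b > 0"
    then have "g b \<le> 0" by simp
    then obtain x where "a \<le> x" "x \<le> b" "g x = 0"
      using IVT2'[of g b 0 a] ga assms by force
    then show False using assms(3) by auto
  qed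
next
  assume gb: "g b > 0"
  show "g a > 0"
  proof (rule ccontr)
    assume "\<not> g a > 0"
    then have "g a \<le> 0" by simp
    then obtain x where "a \<le> x" "x \<le> b" "g x = 0"
      using IVT'[of g a 0 b] gb assms by force
    then show False using assms(3) by auto
  qed
qed



lemma deriv_limit:
  fixes \<Phi> :: "real^'n \<Rightarrow> real^'m"
  assumes "(\<Phi> has_derivative (\<lambda>v. J *v v)) (at z)"
  shows "((\<lambda>s. (\<Phi> (z + s *\<^sub>R e) - \<Phi> z) $ k / s) \<longlongrightarrow> (J *v e) $ k) (at_right 0)"
proof -
  have h1: "((\<lambda>s. z + s *\<^sub>R e) has_derivative (\<lambda>s. s *\<^sub>R e)) (at 0)"
    by (auto intro!: derivative_eq_intros)
  have h2: "(\<Phi> has_derivative (\<lambda>v. J *v v)) (at ((\<lambda>s. z + s *\<^sub>R e) 0))"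
    using assms by simp
  have "((\<Phi> \<circ> (\<lambda>s. z + s *\<^sub>R e)) has_derivative ((\<lambda>v. J *v v) \<circ> (\<lambda>s. s *\<^sub>R e))) (at 0)"
    by (rule diff_chain_at[OF h1 h2])
  then have "((\<lambda>s. (\<Phi> (z + s *\<^sub>R e)) $ k) has_derivative (\<lambda>s. (J *v (s *\<^sub>R e)) $ k)) (at 0)"
    using bounded_linear.has_derivative[OF bounded_linear_vec_nth[of k]] by (simp add: o_def)
  moreover have "(\<lambda>s. (J *v (s *\<^sub>R e)) $ k) = (*) ((J *v e) $ k)"
    by (auto simp: matrix_vector_mult_scaleR mult.commute)
  ultimately have "((\<lambda>s. (\<Phi> (z + s *\<^sub>R e)) $ k) has_field_derivative ((J *v e) $ k)) (at 0)"
    unfolding has_field_derivative_def by simp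
  then have "((\<lambda>s. ((\<Phi> (z + s *\<^sub>R e)) $ k - (\<Phi> (z + 0 *\<^sub>R e)) $ k) / (s - 0)) \<longlongrightarrow> (J *v e) $ k) (at 0)"
    unfolding has_field_derivative_iff .
  then have "((\<lambda>s. (\<Phi> (z + s *\<^sub>R e) - \<Phi> z) $ k / s) \<longlongrightarrow> (J *v e) $ k) (at 0)"
    by simp
  then show ?thesis using filterlim_at_split by blast
qed

lemma jac_det_nz:
  assumes "distorted_diffeo \<epsilon> \<Phi>" "\<epsilon> > 0"
  shows "det (jac \<Phi> x) \<noteq> 0"
proof -
  have "inj ((*v) (jac \<Phi> x))"
  proof (rule linear_injective_0[THEN iffD2])
    show "linear ((*v) (jac \<Phi> x))" by simp
    show "\<forall>v. jac \<Phi> x *v v = 0 \<longrightarrow> v = 0"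
      using norm_jac_ge[OF assms] by (metis mult_zero_right norm_le_zero_iff norm_zero)
  qed
  then show ?thesis using det_nz_iff_inj[of "(*v) (jac \<Phi> x)"] by simp
qed

lemma proper_iff:
  assumes "distorted_diffeo \<epsilon> \<Phi>" "\<epsilon> > 0"
  shows "proper_diffeo \<Phi> \<longleftrightarrow> det (jac \<Phi> z) > 0"
proof
  assume "proper_diffeo \<Phi>" then show "det (jac \<Phi> z) > 0" unfolding proper_diffeo_def by blast
next
  assume z: "det (jac \<Phi> z) > 0"
  have cj: "continuous_on UNIV (jac \<Phi>)" using assms(1) unfolding distorted_diffeo_def diffeo_def by blast
  have cd: "continuous_on UNIV (\<lambda>x. det (jac \<Phi> x))" by (rule continuous_on_det[OF cj])
  show "proper_diffeo \<Phi>" unfolding proper_diffeo_def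
  proof
    fix x
    let ?g = "\<lambda>t. det (jac \<Phi> (z + t *\<^sub>R (x - z)))"
    have "continuous_on {0..1} ?g"
      by (rule continuous_on_compose2[OF cd]) (auto intro!: continuous_intros)
    moreover have "\<forall>t\<in>{0..1}. ?g t \<noteq> 0" using jac_det_nz[OF assms] by blast
    ultimately have "?g 0 > 0 \<longleftrightarrow> ?g 1 > 0" using sign_const[of 0 1 ?g] by simp
    then show "det (jac \<Phi> x) > 0" using z by simp
  qed
qed



definition uvec :: "(real^'n \<Rightarrow> real^'n) \<Rightarrow> real^'n \<Rightarrow> real \<Rightarrow> 'n \<Rightarrow> real^'n" where
  "uvec \<Phi> z s i = (\<Phi> (z + s *\<^sub>R axis i 1) - \<Phi> z) /\<^sub>R s"

lemma u_near:
  assumes dd: "distorted_diffeo \<epsilon> \<Phi>" "\<epsilon> > 0" and s: "s > 0"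
  shows "\<bar>uvec \<Phi> z s i \<bullet> uvec \<Phi> z s j - (if i = j then 1 else 0)\<bar> \<le> 3 * \<epsilon>"
proof -
  let ?a = "s *\<^sub>R axis i (1::real)" and ?b = "s *\<^sub>R axis j (1::real)"
  have na: "norm ?a \<le> s" "norm ?b \<le> s" using s by auto
  have p: "\<bar>(\<Phi> (z + ?a) - \<Phi> z) \<bullet> (\<Phi> (z + ?b) - \<Phi> z) - ?a \<bullet> ?b\<bar> \<le> 3 * \<epsilon> * s^2"
    by (rule polar[OF dd na])
  have ab: "?a \<bullet> ?b = s^2 * (if i = j then 1 else 0)"
    by (simp add: inner_axis_axis power2_eq_square)
  have "uvec \<Phi> z s i \<bullet> uvec \<Phi> z s j = ((\<Phi> (z + ?a) - \<Phi> z) \<bullet> (\<Phi> (z + ?b) - \<Phi> z)) / s^2"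
    unfolding uvec_def by (simp add: power2_eq_square divide_inverse inverse_mult_distrib mult_ac)
  then have "uvec \<Phi> z s i \<bullet> uvec \<Phi> z s j - (if i = j then 1 else 0)
      = ((\<Phi> (z + ?a) - \<Phi> z) \<bullet> (\<Phi> (z + ?b) - \<Phi> z) - ?a \<bullet> ?b) / s^2"
    using s ab by (simp add: field_simps)
  then have "\<bar>uvec \<Phi> z s i \<bullet> uvec \<Phi> z s j - (if i = j then 1 else 0)\<bar>
      = \<bar>(\<Phi> (z + ?a) - \<Phi> z) \<bullet> (\<Phi> (z + ?b) - \<Phi> z) - ?a \<bullet> ?b\<bar> / s^2"
    by simp
  also have "\<dots> \<le> 3 * \<epsilon> * s^2 / s^2" using p s by (intro divide_right_mono) auto
  also have "\<dots> = 3 * \<epsilon>" using s by simp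
  finally show ?thesis .
qed

lemma u_gs:
  fixes \<Phi> :: "real^'n \<Rightarrow> real^'n"
  assumes dd: "distorted_diffeo \<epsilon> \<Phi>" "\<epsilon> > 0" and s: "s > 0"
    and sm: "gsc CARD('n) * (3 * \<epsilon>) \<le> 1/2"
  shows "\<exists>f. (\<forall>i j. f i \<bullet> f j = (if i = j then 1 else 0)) \<and>
             (\<forall>i. norm (f i - uvec \<Phi> z s i) \<le> gsc CARD('n) * (3 * \<epsilon>))"
  using gram_schmidt_approx[of "UNIV :: 'n set" "3 * \<epsilon>" "uvec \<Phi> z s"] u_near[OF dd s] dd(2) sm
  by auto

lemma det_M_nz:
  fixes \<Phi> :: "real^'n \<Rightarrow> real^'n"
  assumes dd: "distorted_diffeo \<epsilon> \<Phi>" "\<epsilon> > 0" and s: "s > 0"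
    and sm: "gsc CARD('n) * (3 * \<epsilon>) \<le> 1/2" "gsc CARD('n) * (3 * \<epsilon>) * real CARD('n) < 1"
  shows "det (colmat (uvec \<Phi> z s)) \<noteq> 0"
proof -
  obtain f where f: "\<forall>i j. f i \<bullet> f j = (if i = j then 1 else 0)"
      "\<forall>i. norm (f i - uvec \<Phi> z s i) \<le> gsc CARD('n) * (3 * \<epsilon>)"
    using u_gs[OF dd s sm(1)] by blast
  show ?thesis
    by (rule near_orth_det[OF f(1) _ sm(2)]) (use f(2) in \<open>simp add: norm_minus_commute\<close>)
qed



lemma core_est:
  fixes \<Phi> :: "real^'n \<Rightarrow> real^'n"
  assumes dd: "distorted_diffeo \<epsilon> \<Phi>" "\<epsilon> > 0" and r: "r > 0" and e1: "\<epsilon> < 1"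
    and f: "\<forall>i j. f i \<bullet> f j = (if i = j then 1 else 0)"
      "\<forall>i. norm (f i - uvec \<Phi> z r i) \<le> gsc CARD('n) * (3 * \<epsilon>)"
    and x: "norm (x - z) \<le> r"
  shows "norm (\<Phi> x - \<Phi> z - colmat f *v (x - z)) \<le> real CARD('n) * (3 + 6 * gsc CARD('n)) * \<epsilon> * r"
proof -
  define K where "K = gsc CARD('n)"
  define w where "w = x - z"
  define y where "y = \<Phi> x - \<Phi> z"
  have xw: "x = z + w" unfolding w_def by simp
  have Q: "orthogonal_matrix (colmat f)" by (rule orth_colmat[OF f(1)])
  have ny: "norm y \<le> 2 * r"
  proof -
    have "norm y \<le> sqrt (1+\<epsilon>) * norm (x - z)" unfolding y_def by (rule lip_upper[OF dd])
    moreover have "sqrt (1+\<epsilon>) \<le> 2"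
    proof -
      have "sqrt (1+\<epsilon>) \<le> sqrt 4" using e1 by (intro real_sqrt_le_mono) simp
      then show ?thesis by simp
    qed
    moreover have "sqrt (1+\<epsilon>) * norm (x - z) \<le> 2 * r"
      using \<open>sqrt (1+\<epsilon>) \<le> 2\<close> x by (intro mult_mono) auto
    ultimately show ?thesis by linarith
  qed
  have comp: "\<bar>f i \<bullet> y - w $ i\<bar> \<le> (3 + 6 * K) * \<epsilon> * r" for i
  proof -
    let ?a = "r *\<^sub>R axis i (1::real)"
    have na: "norm ?a \<le> r" using r by simp
    have nw: "norm w \<le> r" using x w_def by simp
    have p: "\<bar>(\<Phi> (z + ?a) - \<Phi> z) \<bullet> (\<Phi> (z + w) - \<Phi> z) - ?a \<bullet> w\<bar> \<le> 3 * \<epsilon> * r^2"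
      by (rule polar[OF dd na nw])
    have aw: "?a \<bullet> w = r * w $ i" by (simp add: inner_axis')
    have uy: "uvec \<Phi> z r i \<bullet> y = ((\<Phi> (z + ?a) - \<Phi> z) \<bullet> (\<Phi> (z + w) - \<Phi> z)) / r"
      unfolding uvec_def y_def xw by (simp add: divide_inverse mult.commute)
    have "uvec \<Phi> z r i \<bullet> y - w $ i = ((\<Phi> (z + ?a) - \<Phi> z) \<bullet> (\<Phi> (z + w) - \<Phi> z) - ?a \<bullet> w) / r"
      using r uy aw by (simp add: field_simps)
    then have "\<bar>uvec \<Phi> z r i \<bullet> y - w $ i\<bar> = \<bar>(\<Phi> (z + ?a) - \<Phi> z) \<bullet> (\<Phi> (z + w) - \<Phi> z) - ?a \<bullet> w\<bar> / r"
      using r by simp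
    also have "\<dots> \<le> 3 * \<epsilon> * r^2 / r" using p r by (intro divide_right_mono) auto
    also have "\<dots> = 3 * \<epsilon> * r" using r by (simp add: power2_eq_square)
    finally have t1: "\<bar>uvec \<Phi> z r i \<bullet> y - w $ i\<bar> \<le> 3 * \<epsilon> * r" .
    have "\<bar>(f i - uvec \<Phi> z r i) \<bullet> y\<bar> \<le> norm (f i - uvec \<Phi> z r i) * norm y"
      by (rule Cauchy_Schwarz_ineq2)
    also have "\<dots> \<le> (K * (3 * \<epsilon>)) * (2 * r)"
      using f(2) ny K_def gsc_nonneg[of "CARD('n)"] dd(2) by (intro mult_mono) auto
    finally have t2: "\<bar>(f i - uvec \<Phi> z r i) \<bullet> y\<bar> \<le> (K * (3 * \<epsilon>)) * (2 * r)" .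
    have "f i \<bullet> y - w $ i = (uvec \<Phi> z r i \<bullet> y - w $ i) + (f i - uvec \<Phi> z r i) \<bullet> y"
      by (simp add: inner_diff_left)
    then have "\<bar>f i \<bullet> y - w $ i\<bar> \<le> 3 * \<epsilon> * r + (K * (3 * \<epsilon>)) * (2 * r)"
      using t1 t2 by linarith
    also have "\<dots> = (3 + 6 * K) * \<epsilon> * r" by (simp add: algebra_simps)
    finally show ?thesis .
  qed
  have "norm (transpose (colmat f) *v y - w) \<le> (\<Sum>i\<in>UNIV. \<bar>(transpose (colmat f) *v y - w) $ i\<bar>)"
    by (rule norm_le_l1_cart)
  also have "\<dots> \<le> (\<Sum>i\<in>(UNIV::'n set). (3 + 6 * K) * \<epsilon> * r)"
    using comp by (intro sum_mono) (metis transpose_colmat_mult vector_minus_component)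
  also have "\<dots> = real CARD('n) * (3 + 6 * K) * \<epsilon> * r" by simp
  finally have est: "norm (transpose (colmat f) *v y - w) \<le> real CARD('n) * (3 + 6 * K) * \<epsilon> * r" .
  have "norm (y - colmat f *v w) = norm (transpose (colmat f) *v (y - colmat f *v w))"
    using orth_norm[of "transpose (colmat f)"] Q by simp
  also have "transpose (colmat f) *v (y - colmat f *v w) = transpose (colmat f) *v y - w"
    using orth_transpose_mult[OF Q] by (simp add: matrix_vector_mult_diff_distrib)
  finally show ?thesis using est unfolding y_def w_def K_def by simp
qed

lemma sign_path_Q:
  fixes M :: "real^'n^'n"
  assumes f: "\<forall>i j. f i \<bullet> f j = (if i = j then 1 else 0)"
    and cl: "\<forall>i. norm (column i M - f i) \<le> \<beta>"
    and sm: "\<beta> * real CARD('n) < 1"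
  shows "det M > 0 \<longleftrightarrow> det (colmat f) > 0"
proof -
  let ?Q = "colmat f"
  let ?g = "\<lambda>t. det (M + t *\<^sub>R (?Q - M))"
  have cont: "continuous_on {0..1} ?g"
    by (rule continuous_on_det) (auto intro!: continuous_intros)
  have nz: "\<forall>t\<in>{0..1}. ?g t \<noteq> 0"
  proof
    fix t :: real assume t: "t \<in> {0..1}"
    show "?g t \<noteq> 0"
    proof (rule near_orth_det[OF f _ sm], rule allI)
      fix i
      have "column i (M + t *\<^sub>R (?Q - M)) - f i = (1 - t) *\<^sub>R (column i M - f i)"
        by (simp add: column_def vec_eq_iff algebra_simps colmat_def)
      then have "norm (column i (M + t *\<^sub>R (?Q - M)) - f i) = \<bar>1 - t\<bar> * norm (column i M - f i)"
        by simp
      also have "\<dots> \<le> 1 * \<beta>" using t cl by (intro mult_mono) auto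
      finally show "norm (column i (M + t *\<^sub>R (?Q - M)) - f i) \<le> \<beta>" by simp
    qed
  qed
  have "?g 0 > 0 \<longleftrightarrow> ?g 1 > 0" by (rule sign_const[OF _ cont nz]) simp
  then show ?thesis by simp
qed

lemma colmat_uvec_entry: "colmat (uvec \<Phi> z s) $ k $ i = (\<Phi> (z + s *\<^sub>R axis i 1) - \<Phi> z) $ k / s"
  unfolding colmat_def uvec_def by (simp add: divide_inverse mult.commute)

lemma sign_path_J:
  fixes \<Phi> :: "real^'n \<Rightarrow> real^'n"
  assumes dd: "distorted_diffeo \<epsilon> \<Phi>" "\<epsilon> > 0" and r: "r > 0"
    and sm: "gsc CARD('n) * (3 * \<epsilon>) \<le> 1/2" "gsc CARD('n) * (3 * \<epsilon>) * real CARD('n) < 1"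
  shows "det (jac \<Phi> z) > 0 \<longleftrightarrow> det (colmat (uvec \<Phi> z r)) > 0"
proof -
  let ?F = "\<lambda>s. colmat (uvec \<Phi> z s)"
  have df: "diffeo \<Phi>" using dd(1) unfolding distorted_diffeo_def by blast
  have hd: "(\<Phi> has_derivative (\<lambda>v. jac \<Phi> z *v v)) (at z)" by (rule diffeo_deriv[OF df])
  have lim: "((\<lambda>s. det (?F s)) \<longlongrightarrow> det (jac \<Phi> z)) (at_right 0)"
  proof (rule tendsto_det)
    fix k i
    have "((\<lambda>s. (\<Phi> (z + s *\<^sub>R axis i 1) - \<Phi> z) $ k / s) \<longlongrightarrow> (jac \<Phi> z *v axis i 1) $ k) (at_right 0)"
      by (rule deriv_limit[OF hd])
    moreover have "(jac \<Phi> z *v axis i 1) $ k = jac \<Phi> z $ k $ i"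
      by (simp add: matrix_vector_mult_basis column_def)
    ultimately show "((\<lambda>s. ?F s $ k $ i) \<longlongrightarrow> jac \<Phi> z $ k $ i) (at_right 0)"
      by (simp add: colmat_uvec_entry)
  qed
  have cP: "continuous_on UNIV \<Phi>"
    using df unfolding diffeo_def by (meson differentiable_at_imp_differentiable_on differentiable_imp_continuous_on)
  have contF: "continuous_on {a..b} (\<lambda>s. det (?F s))" if a: "a > 0" for a b
  proof (rule continuous_on_det)
    have eq: "?F = (\<lambda>s. \<chi> k i. (\<Phi> (z + s *\<^sub>R axis i 1) - \<Phi> z) $ k / s)"
      by (simp add: vec_eq_iff colmat_uvec_entry fun_eq_iff)
    have "continuous_on {a..b} (\<lambda>s. \<Phi> (z + s *\<^sub>R axis i 1))" for i
      by (rule continuous_on_compose2[OF cP]) (auto intro!: continuous_intros)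
    then show "continuous_on {a..b} ?F" unfolding eq
      using a by (auto intro!: continuous_intros)
  qed
  have nz: "det (?F s) \<noteq> 0" if "s > 0" for s using det_M_nz[OF dd that sm] .
  have jnz: "det (jac \<Phi> z) \<noteq> 0" by (rule jac_det_nz[OF dd])
  show ?thesis
  proof (cases "det (jac \<Phi> z) > 0")
    case True
    then have "eventually (\<lambda>s. det (?F s) > 0) (at_right 0)" using lim order_tendstoD(1) by blast
    then obtain b where b: "b > 0" "\<forall>y>0. y < b \<longrightarrow> det (?F y) > 0"
      unfolding eventually_at_right_field by auto
    define s0 where "s0 = min r (b/2)"
    have s0: "s0 > 0" "s0 \<le> r" "s0 < b" using b r unfolding s0_def by auto
    have "det (?F s0) > 0" using b s0 by auto
    moreover have "det (?F s0) > 0 \<longleftrightarrow> det (?F r) > 0"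
      by (rule sign_const[OF s0(2) contF[OF s0(1)]]) (use nz s0 in auto)
    ultimately show ?thesis using True by simp
  next
    case False
    then have neg: "det (jac \<Phi> z) < 0" using jnz by simp
    then have "eventually (\<lambda>s. det (?F s) < 0) (at_right 0)" using lim order_tendstoD(2) by blast
    then obtain b where b: "b > 0" "\<forall>y>0. y < b \<longrightarrow> det (?F y) < 0"
      unfolding eventually_at_right_field by auto
    define s0 where "s0 = min r (b/2)"
    have s0: "s0 > 0" "s0 \<le> r" "s0 < b" using b r unfolding s0_def by auto
    have "\<not> det (?F s0) > 0" using b s0 by auto
    moreover have "det (?F s0) > 0 \<longleftrightarrow> det (?F r) > 0"
      by (rule sign_const[OF s0(2) contF[OF s0(1)]]) (use nz s0 in auto)
    ultimately show ?thesis using False by simp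
  qed
qed

lemma core:
  fixes \<Phi> :: "real^'n \<Rightarrow> real^'n"
  assumes dd: "distorted_diffeo \<epsilon> \<Phi>" "\<epsilon> > 0" and r: "r > 0" and e1: "\<epsilon> < 1"
    and sm: "gsc CARD('n) * (3 * \<epsilon>) \<le> 1/2" "gsc CARD('n) * (3 * \<epsilon>) * real CARD('n) < 1"
  shows "\<exists>Q. orthogonal_matrix Q \<and>
     (\<forall>x. norm (x - z) \<le> r \<longrightarrow> norm (\<Phi> x - \<Phi> z - Q *v (x - z)) \<le> real CARD('n) * (3 + 6 * gsc CARD('n)) * \<epsilon> * r) \<and>
     (det Q > 0 \<longleftrightarrow> det (jac \<Phi> z) > 0)"
proof -
  obtain f where f: "\<forall>i j. f i \<bullet> f j = (if i = j then 1 else 0)"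
      "\<forall>i. norm (f i - uvec \<Phi> z r i) \<le> gsc CARD('n) * (3 * \<epsilon>)"
    using u_gs[OF dd r sm(1)] by blast
  have s1: "det (colmat (uvec \<Phi> z r)) > 0 \<longleftrightarrow> det (colmat f) > 0"
    by (rule sign_path_Q[OF f(1) _ sm(2)]) (use f(2) in \<open>simp add: norm_minus_commute\<close>)
  show ?thesis
    using orth_colmat[OF f(1)] core_est[OF dd r e1 f] s1 sign_path_J[OF dd r sm] by blast
qed



lemma leb_closed: "closed S \<Longrightarrow> S \<in> sets lebesgue"
  by (metis borel_closed sets_completionI_sets sets_lborel)
lemma leb_open: "open S \<Longrightarrow> S \<in> sets lebesgue"
  by (metis borel_open sets_completionI_sets sets_lborel)

lemma slab_half:
  fixes n :: "real^'n"
  assumes n: "norm n = 1" and tau: "\<tau> > 0"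
  shows "measure lebesgue {y. -\<tau> \<le> n \<bullet> y \<and> n \<bullet> y < \<tau> \<and> norm y \<le> 1}
         \<le> 2 * \<tau> * measure lebesgue (cball (0::real^'n) 2)"
proof -
  define H where "H = {y. -\<tau> \<le> n \<bullet> y \<and> n \<bullet> y < \<tau> \<and> norm y \<le> 1}"
  have Heq: "H = cball 0 1 \<inter> {y. -\<tau> \<le> n \<bullet> y} \<inter> {y. n \<bullet> y < \<tau>}"
    unfolding H_def by auto
  have Hs: "H \<in> sets lebesgue"
    unfolding Heq
    by (intro sets.Int leb_closed leb_open closed_cball closed_halfspace_ge open_halfspace_lt)
  have Hl: "H \<in> lmeasurable"
    by (rule bounded_set_imp_lmeasurable[OF _ Hs]) (auto simp: Heq intro: bounded_subset[OF bounded_cball])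
  define N where "N = nat \<lfloor>1 / (2*\<tau>)\<rfloor> + 1"
  have N1: "real (N - 1) \<le> 1 / (2*\<tau>)" unfolding N_def
    using tau by simp
  have N2: "real N \<ge> 1 / (2*\<tau>)" unfolding N_def
    using tau by (simp add: add.commute) linarith
  define A where "A = (\<lambda>k::nat. (+) ((2*\<tau>*real k) *\<^sub>R n) ` H)"
  have Al: "A k \<in> lmeasurable" for k unfolding A_def by (rule measurable_translation[OF Hl])
  have Am: "measure lebesgue (A k) = measure lebesgue H" for k unfolding A_def by (rule measure_translation)
  have Ain: "n \<bullet> y \<ge> 2*\<tau>*real k - \<tau> \<and> n \<bullet> y < 2*\<tau>*real k + \<tau> \<and> norm y \<le> 2*\<tau>*real k + 1"
    if yA: "y \<in> A k" for y k
  proof -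
    obtain h where h: "h \<in> H" "y = (2*\<tau>*real k) *\<^sub>R n + h" using yA unfolding A_def by auto
    have "n \<bullet> y = 2*\<tau>*real k + n \<bullet> h" using h n by (simp add: inner_add_right norm_eq_1)
    moreover have "norm y \<le> 2*\<tau>*real k + 1"
    proof -
      have "norm y \<le> norm ((2*\<tau>*real k) *\<^sub>R n) + norm h" using h norm_triangle_ineq by blast
      also have "norm ((2*\<tau>*real k) *\<^sub>R n) = 2*\<tau>*real k" using n tau by simp
      finally show ?thesis using h(1) unfolding H_def by simp
    qed
    ultimately show ?thesis using h(1) unfolding H_def by auto
  qed
  have disj: "disjoint_family_on A {..<N}"
    unfolding disjoint_family_on_def
  proof (intro ballI impI)
    fix j k assume "j \<in> {..<N}" "k \<in> {..<N}" "j \<noteq> k"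
    show "A j \<inter> A k = {}"
    proof (rule ccontr)
      assume "A j \<inter> A k \<noteq> {}"
      then obtain y where y: "y \<in> A j" "y \<in> A k" by auto
      have jk: "j < k \<or> k < j" using \<open>j \<noteq> k\<close> by auto
      then show False
      proof
        assume "j < k"
        then have "real j + 1 \<le> real k" by simp
        then have "2*\<tau>*(real j + 1) \<le> 2*\<tau>*real k" using tau by simp
        then show False using Ain[OF y(1)] Ain[OF y(2)] by (simp add: algebra_simps)
      next
        assume "k < j"
        then have "real k + 1 \<le> real j" by simp
        then have "2*\<tau>*(real k + 1) \<le> 2*\<tau>*real j" using tau by simp
        then show False using Ain[OF y(1)] Ain[OF y(2)] by (simp add: algebra_simps)
      qed
    qed
  qed
  have sub: "(\<Union>k\<in>{..<N}. A k) \<subseteq> cball 0 2"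
  proof
    fix y assume "y \<in> (\<Union>k\<in>{..<N}. A k)"
    then obtain k where k: "k < N" "y \<in> A k" by auto
    have "real k \<le> real (N - 1)" using k by simp
    then have "2*\<tau>*real k \<le> 2*\<tau>*(1/(2*\<tau>))" using N1 tau by (intro mult_left_mono) auto
    then have "2*\<tau>*real k \<le> 1" using tau by simp
    then show "y \<in> cball 0 2" using Ain[OF k(2)] by simp
  qed
  have "measure lebesgue (\<Union>k\<in>{..<N}. A k) = (\<Sum>k\<in>{..<N}. measure lebesgue (A k))"
  proof (rule measure_finite_Union)
    show "finite {..<N}" by simp
    show "A ` {..<N} \<subseteq> sets lebesgue" using Al by (auto intro: fmeasurableD)
    show "disjoint_family_on A {..<N}" by (rule disj)
    show "emeasure lebesgue (A i) \<noteq> \<infinity>" for i using emeasure_eq_measure2[OF Al[of i]] by simp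
  qed
  also have "\<dots> = real N * measure lebesgue H" using Am by simp
  finally have eqU: "measure lebesgue (\<Union>k\<in>{..<N}. A k) = real N * measure lebesgue H" .
  have "measure lebesgue (\<Union>k\<in>{..<N}. A k) \<le> measure lebesgue (cball (0::real^'n) 2)"
    by (rule measure_mono_fmeasurable[OF sub]) (use Al in \<open>auto intro!: sets.finite_UN fmeasurableD\<close>)
  then have NH: "real N * measure lebesgue H \<le> measure lebesgue (cball (0::real^'n) 2)" using eqU by simp
  have Npos: "real N > 0" unfolding N_def by simp
  have "measure lebesgue H \<le> measure lebesgue (cball (0::real^'n) 2) / real N"
    using NH Npos by (simp add: field_simps)
  also have "\<dots> \<le> measure lebesgue (cball (0::real^'n) 2) / (1 / (2*\<tau>))"
    using N2 tau Npos by (intro divide_left_mono) auto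
  also have "\<dots> = 2 * \<tau> * measure lebesgue (cball (0::real^'n) 2)" by simp
  finally show ?thesis unfolding H_def .
qed

lemma slab_measure:
  fixes n p :: "real^'n"
  assumes n: "norm n = 1" and t: "t > 0"
  shows "measure lebesgue {x. \<bar>n \<bullet> (x - p)\<bar> \<le> t \<and> norm (x - p) \<le> 1}
         \<le> 4 * t * measure lebesgue (cball (0::real^'n) 2)"
proof -
  define H where "H = {y. -(2*t) \<le> n \<bullet> y \<and> n \<bullet> y < 2*t \<and> norm y \<le> 1}"
  have Heq: "H = cball 0 1 \<inter> {y. -(2*t) \<le> n \<bullet> y} \<inter> {y. n \<bullet> y < 2*t}"
    unfolding H_def by auto
  have Hs: "H \<in> sets lebesgue"
    unfolding Heq
    by (intro sets.Int leb_closed leb_open closed_cball closed_halfspace_ge open_halfspace_lt)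
  have Hl: "H \<in> lmeasurable"
    by (rule bounded_set_imp_lmeasurable[OF _ Hs]) (auto simp: Heq intro: bounded_subset[OF bounded_cball])
  have "{x. \<bar>n \<bullet> (x - p)\<bar> \<le> t \<and> norm (x - p) \<le> 1} \<subseteq> (+) p ` H"
  proof
    fix x assume x: "x \<in> {x. \<bar>n \<bullet> (x - p)\<bar> \<le> t \<and> norm (x - p) \<le> 1}"
    have "x - p \<in> H" using x t unfolding H_def by auto
    then show "x \<in> (+) p ` H" by (rule rev_image_eqI) simp
  qed
  moreover have "{x. \<bar>n \<bullet> (x - p)\<bar> \<le> t \<and> norm (x - p) \<le> 1} \<in> sets lebesgue"
  proof -
    have "{x. \<bar>n \<bullet> (x - p)\<bar> \<le> t \<and> norm (x - p) \<le> 1} = cball p 1 \<inter> {x. n \<bullet> x \<le> n \<bullet> p + t} \<inter> {x. n \<bullet> x \<ge> n \<bullet> p - t}"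
      by (auto simp: dist_norm norm_minus_commute inner_diff_right abs_le_iff)
    moreover have "closed (cball p 1 \<inter> {x. n \<bullet> x \<le> n \<bullet> p + t} \<inter> {x. n \<bullet> x \<ge> n \<bullet> p - t})"
      by (intro closed_Int closed_cball closed_halfspace_le closed_halfspace_ge)
    ultimately show ?thesis using leb_closed by simp
  qed
  ultimately have "measure lebesgue {x. \<bar>n \<bullet> (x - p)\<bar> \<le> t \<and> norm (x - p) \<le> 1} \<le> measure lebesgue ((+) p ` H)"
    by (intro measure_mono_fmeasurable) (auto intro: measurable_translation[OF Hl])
  also have "\<dots> = measure lebesgue H" by (rule measure_translation)
  also have "\<dots> \<le> 2 * (2*t) * measure lebesgue (cball (0::real^'n) 2)"
    unfolding H_def by (rule slab_half[OF n]) (use t in simp)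
  finally show ?thesis by simp
qed



lemma smallness:
  fixes K Dn \<epsilon> :: real
  assumes K: "K \<ge> 0" and Dn: "Dn \<ge> 0" and e: "\<epsilon> > 0" "\<epsilon> < 1 / (6 * (K + 1) * (Dn + 1))"
  shows "\<epsilon> < 1" "K * (3 * \<epsilon>) \<le> 1/2" "K * (3 * \<epsilon>) * Dn < 1"
proof -
  define P where "P = (K + 1) * (Dn + 1)"
  have P1: "P \<ge> 1" unfolding P_def using K Dn
    by (metis add_increasing2 less_eq_real_def mult_left_mono mult.right_neutral zero_le_one le_add_same_cancel2 order_trans)
  have eP: "\<epsilon> * (6 * P) < 1" using e P1 unfolding P_def by (simp add: field_simps)
  have KP: "K \<le> P" unfolding P_def using K Dn by (simp add: algebra_simps)
  have KDP: "K * Dn \<le> P" unfolding P_def using K Dn by (simp add: algebra_simps)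
  have "\<epsilon> * 6 \<le> \<epsilon> * (6 * P)" using P1 e by simp
  then show "\<epsilon> < 1" using eP by linarith
  have "K * \<epsilon> \<le> P * \<epsilon>" using KP e by (intro mult_right_mono) auto
  then show "K * (3 * \<epsilon>) \<le> 1/2" using eP by (simp add: algebra_simps)
  have "K * Dn * \<epsilon> \<le> P * \<epsilon>" using KDP e by (intro mult_right_mono) auto
  then show "K * (3 * \<epsilon>) * Dn < 1" using eP by (simp add: algebra_simps)
qed

lemma motion_proper:
  assumes Q: "orthogonal_matrix Q" and A: "\<forall>x. A x = Q *v x + a"
  shows "proper_motion A \<longleftrightarrow> det Q > 0"
proof
  assume "proper_motion A"
  then obtain T x0 where T: "orthogonal_matrix T" "det T = 1" "\<forall>x. A x = T *v x + x0"
    unfolding proper_motion_def by blast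
  have "x0 = a" using T(3) A by (metis add.left_neutral matrix_vector_mult_0_right)
  then have "\<forall>x. T *v x = Q *v x" using T(3) A by (metis add_right_cancel)
  then have "T = Q" by (simp add: matrix_eq)
  then show "det Q > 0" using T(2) by simp
next
  assume "det Q > 0"
  then have "det Q = 1" using det_orthogonal_matrix[OF Q] by auto
  then show "proper_motion A" unfolding proper_motion_def using Q A by blast
qed

lemma nondeg:
  fixes Q L :: "real^'n^'n" and xs :: "nat \<Rightarrow> real^'n"
  assumes Q: "orthogonal_matrix Q" and t0: "t0 > 0"
    and err: "\<forall>i\<le>CARD('n). norm ((L - Q) *v (xs i - xs 0)) \<le> t0"
    and dst: "\<forall>i\<le>CARD('n). norm (xs i - xs 0) \<le> 1"
    and s: "0 \<le> s" "s \<le> 1" and d0: "det (Q + s *\<^sub>R (L - Q)) = 0"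
  shows "simplex_vol xs \<le> 4 * t0 * measure lebesgue (cball (0::real^'n) 2)"
proof -
  define M where "M = L - Q"
  have "\<not> inj ((*v) (Q + s *\<^sub>R M))" using d0 det_nz_iff_inj[of "(*v) (Q + s *\<^sub>R M)"] M_def by simp
  then obtain v where v: "v \<noteq> 0" "(Q + s *\<^sub>R M) *v v = 0"
    using linear_injective_0[of "(*v) (Q + s *\<^sub>R M)"] by auto
  have Qv: "Q *v v = - (s *\<^sub>R (M *v v))" using v(2)
    by (simp add: matrix_vector_mult_add_rdistrib scaleR_matrix_vector_assoc eq_neg_iff_add_eq_0)
  have nQv: "norm (Q *v v) = norm v" by (rule orth_norm[OF Q])
  have nvpos: "norm v > 0" using v(1) by simp
  have sMv: "norm v = s * norm (M *v v)" using Qv nQv s by simp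
  have Mv: "norm v \<le> norm (M *v v)"
  proof -
    have "s * norm (M *v v) \<le> 1 * norm (M *v v)" using s by (intro mult_right_mono) auto
    then show ?thesis using sMv by simp
  qed
  have Mvpos: "norm (M *v v) > 0" using Mv nvpos by linarith
  define n where "n = transpose M *v (M *v v)"
  have nw: "n \<bullet> w = (M *v v) \<bullet> (M *v w)" for w
  proof -
    have "n \<bullet> w = w \<bullet> ((M *v v) v* M)" unfolding n_def by (simp add: inner_commute)
    also have "\<dots> = ((M *v v) v* M) \<bullet> w" by (rule inner_commute)
    also have "\<dots> = (M *v v) \<bullet> (M *v w)" by (rule dot_lmul_matrix)
    finally show ?thesis .
  qed
  have nv: "n \<bullet> v = (norm (M *v v))^2" using nw[of v] by (simp add: power2_norm_eq_inner)
  have Mn: "norm (M *v v) \<le> norm n"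
  proof -
    have "(norm (M *v v))^2 \<le> norm n * norm v" using nv Cauchy_Schwarz_ineq2[of n v]
      by (metis abs_ge_self order_trans)
    also have "\<dots> \<le> norm n * norm (M *v v)" using Mv by (intro mult_left_mono) auto
    finally have "norm (M *v v) * norm (M *v v) \<le> norm n * norm (M *v v)" by (simp add: power2_eq_square)
    then show ?thesis using Mvpos by simp
  qed
  have npos: "norm n > 0" using Mn Mvpos by linarith
  define nh where "nh = n /\<^sub>R norm n"
  have nh1: "norm nh = 1" unfolding nh_def using npos by simp
  define P where "P = {x. \<bar>nh \<bullet> (x - xs 0)\<bar> \<le> t0 \<and> norm (x - xs 0) \<le> 1}"
  have Peq: "P = cball (xs 0) 1 \<inter> {x. nh \<bullet> x \<le> nh \<bullet> xs 0 + t0} \<inter> {x. nh \<bullet> x \<ge> nh \<bullet> xs 0 - t0}"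
    unfolding P_def by (auto simp: dist_norm norm_minus_commute inner_diff_right abs_le_iff)
  have Pconv: "convex P" unfolding Peq
    by (intro convex_Int convex_cball convex_halfspace_le convex_halfspace_ge)
  have Pcomp: "compact P" unfolding Peq
    by (intro compact_Int_closed closed_halfspace_le closed_halfspace_ge compact_cball)
  have inP: "xs i \<in> P" if i: "i \<le> CARD('n)" for i
  proof -
    have "\<bar>n \<bullet> (xs i - xs 0)\<bar> \<le> norm (M *v v) * t0"
    proof -
      have "\<bar>n \<bullet> (xs i - xs 0)\<bar> \<le> norm (M *v v) * norm (M *v (xs i - xs 0))"
        unfolding nw by (rule Cauchy_Schwarz_ineq2)
      also have "\<dots> \<le> norm (M *v v) * t0" using err i M_def by (intro mult_left_mono) auto
      finally show ?thesis .
    qed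
    also have "\<dots> \<le> norm n * t0" using Mn t0 by (intro mult_right_mono) auto
    finally have "\<bar>n \<bullet> (xs i - xs 0)\<bar> / norm n \<le> t0" using npos by (simp add: field_simps)
    then have "\<bar>nh \<bullet> (xs i - xs 0)\<bar> \<le> t0" unfolding nh_def using npos
      by (simp add: abs_mult divide_inverse mult.commute)
    then show ?thesis unfolding P_def using dst i by auto
  qed
  have hullP: "convex hull (xs ` {0..CARD('n)}) \<subseteq> P"
    by (rule hull_minimal) (use inP Pconv in auto)
  have "simplex_vol xs \<le> measure lebesgue P"
    unfolding simplex_vol_def
  proof (rule measure_mono_fmeasurable[OF hullP])
    show "convex hull (xs ` {0..CARD('n)}) \<in> sets lebesgue"
      by (intro fmeasurableD lmeasurable_compact compact_convex_hull finite_imp_compact) auto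
    show "P \<in> fmeasurable lebesgue" by (rule lmeasurable_compact[OF Pcomp])
  qed
  also have "\<dots> \<le> 4 * t0 * measure lebesgue (cball (0::real^'n) 2)"
    unfolding P_def by (rule slab_measure[OF nh1 t0])
  finally show ?thesis .
qed

theorem theorem4p1:
  assumes "CARD('n) \<ge> 2"
  shows
  "(\<exists>c C'. c > 0 \<and> C' > 0 \<and>
      (\<forall>\<epsilon> (\<Phi> :: real^'n \<Rightarrow> real^'n) z r.
         0 < \<epsilon> \<and> \<epsilon> < c \<and> distorted_diffeo \<epsilon> \<Phi> \<and> r > 0 \<longrightarrow>
         (\<exists>A. euclidean_motion A \<and> (\<forall>x\<in>ball z r. norm (\<Phi> x - A x) \<le> C' * \<epsilon> * r)
              \<and> (proper_motion A \<longleftrightarrow> proper_diffeo \<Phi>))))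
   \<and>
   (\<exists>c0 c'. c0 > 0 \<and> c' > 0 \<and>
      (\<forall>\<delta> (\<Phi> :: real^'n \<Rightarrow> real^'n) \<eta> (xs :: nat \<Rightarrow> real^'n) L b.
         0 < \<delta> \<and> \<delta> < c0 \<and> distorted_diffeo \<delta> \<Phi> \<and> 0 < \<eta> \<and> \<eta> < 1
         \<and> (\<forall>i\<le>CARD('n). \<forall>j\<le>CARD('n). dist (xs i) (xs j) \<le> 1)
         \<and> simplex_vol xs \<ge> \<eta> ^ CARD('n)
         \<and> \<delta> < c' * \<eta> ^ CARD('n)
         \<and> (\<forall>i\<le>CARD('n). L *v xs i + b = \<Phi> (xs i))
         \<longrightarrow> (proper_diffeo \<Phi> \<longleftrightarrow> det L > 0)))"
proof -
  define K where "K = gsc CARD('n)"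
  define Dn where "Dn = real CARD('n)"
  define c where "c = 1 / (6 * (K + 1) * (Dn + 1))"
  define Cc where "Cc = Dn * (3 + 6 * K)"
  define m2 where "m2 = measure lebesgue (cball (0::real^'n) 2)"
  have K0: "K \<ge> 0" unfolding K_def by (rule gsc_nonneg)
  have D1: "Dn \<ge> 1" unfolding Dn_def using assms by simp
  have cpos: "c > 0" unfolding c_def using K0 D1 by simp
  have Ccpos: "Cc > 0" unfolding Cc_def using K0 D1 by simp
  have m20: "m2 \<ge> 0" unfolding m2_def by simp
  have sm: "\<epsilon> < 1 \<and> gsc CARD('n) * (3 * \<epsilon>) \<le> 1/2 \<and> gsc CARD('n) * (3 * \<epsilon>) * real CARD('n) < 1"
    if "0 < \<epsilon>" "\<epsilon> < c" for \<epsilon>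
    using smallness[OF K0 _ that[unfolded c_def]] D1 unfolding K_def Dn_def by auto
  have coreC: "\<exists>Q. orthogonal_matrix Q \<and>
     (\<forall>x. norm (x - z) \<le> r \<longrightarrow> norm (\<Phi> x - \<Phi> z - Q *v (x - z)) \<le> Cc * \<epsilon> * r) \<and>
     (det Q > 0 \<longleftrightarrow> det (jac \<Phi> z) > 0)"
    if "0 < \<epsilon>" "\<epsilon> < c" "distorted_diffeo \<epsilon> \<Phi>" "r > 0"
    for \<epsilon> and \<Phi> :: "real^'n \<Rightarrow> real^'n" and z :: "real^'n" and r
    using core[OF that(3,1,4)] sm[OF that(1,2)] unfolding Cc_def K_def Dn_def by blast
  have partA: "\<exists>c C'. c > 0 \<and> C' > 0 \<and>
      (\<forall>\<epsilon> (\<Phi> :: real^'n \<Rightarrow> real^'n) z r.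
         0 < \<epsilon> \<and> \<epsilon> < c \<and> distorted_diffeo \<epsilon> \<Phi> \<and> r > 0 \<longrightarrow>
         (\<exists>A. euclidean_motion A \<and> (\<forall>x\<in>ball z r. norm (\<Phi> x - A x) \<le> C' * \<epsilon> * r)
              \<and> (proper_motion A \<longleftrightarrow> proper_diffeo \<Phi>)))"
    proof (rule exI[of _ c], rule exI[of _ Cc], intro conjI cpos Ccpos allI impI)
      fix \<epsilon> and \<Phi> :: "real^'n \<Rightarrow> real^'n" and z :: "real^'n" and r :: real
      assume h: "0 < \<epsilon> \<and> \<epsilon> < c \<and> distorted_diffeo \<epsilon> \<Phi> \<and> r > 0"
      then obtain Q where Q: "orthogonal_matrix Q"
        "\<forall>x. norm (x - z) \<le> r \<longrightarrow> norm (\<Phi> x - \<Phi> z - Q *v (x - z)) \<le> Cc * \<epsilon> * r"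
        "det Q > 0 \<longleftrightarrow> det (jac \<Phi> z) > 0"
        using coreC by blast
      define A where "A = (\<lambda>x. Q *v x + (\<Phi> z - Q *v z))"
      have Aeq: "\<forall>x. A x = Q *v x + (\<Phi> z - Q *v z)" unfolding A_def by simp
      show "\<exists>A. euclidean_motion A \<and> (\<forall>x\<in>ball z r. norm (\<Phi> x - A x) \<le> Cc * \<epsilon> * r)
              \<and> (proper_motion A \<longleftrightarrow> proper_diffeo \<Phi>)"
      proof (intro exI[of _ A] conjI ballI)
        show "euclidean_motion A" unfolding euclidean_motion_def using Q(1) Aeq by blast
        fix x assume "x \<in> ball z r"
        then have "norm (x - z) \<le> r" by (simp add: dist_norm norm_minus_commute)
        then have "norm (\<Phi> x - \<Phi> z - Q *v (x - z)) \<le> Cc * \<epsilon> * r" using Q(2) by blast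
        moreover have "\<Phi> x - A x = \<Phi> x - \<Phi> z - Q *v (x - z)"
          unfolding A_def by (simp add: matrix_vector_mult_diff_distrib algebra_simps)
        ultimately show "norm (\<Phi> x - A x) \<le> Cc * \<epsilon> * r" by metis
      next
        show "proper_motion A \<longleftrightarrow> proper_diffeo \<Phi>"
          using motion_proper[OF Q(1) Aeq] Q(3) proper_iff[of \<epsilon> \<Phi> z] h by blast
      qed
    qed
    define c' where "c' = 1 / (8 * Cc * (m2 + 1))"
    have c'pos: "c' > 0" unfolding c'_def using Ccpos m20 by simp
    have partB: "\<exists>c0 c'. c0 > 0 \<and> c' > 0 \<and>
      (\<forall>\<delta> (\<Phi> :: real^'n \<Rightarrow> real^'n) \<eta> (xs :: nat \<Rightarrow> real^'n) L b.
         0 < \<delta> \<and> \<delta> < c0 \<and> distorted_diffeo \<delta> \<Phi> \<and> 0 < \<eta> \<and> \<eta> < 1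
         \<and> (\<forall>i\<le>CARD('n). \<forall>j\<le>CARD('n). dist (xs i) (xs j) \<le> 1)
         \<and> simplex_vol xs \<ge> \<eta> ^ CARD('n)
         \<and> \<delta> < c' * \<eta> ^ CARD('n)
         \<and> (\<forall>i\<le>CARD('n). L *v xs i + b = \<Phi> (xs i))
         \<longrightarrow> (proper_diffeo \<Phi> \<longleftrightarrow> det L > 0))"
    proof (rule exI[of _ c], rule exI[of _ c'], intro conjI cpos c'pos allI impI)
      fix \<delta> and \<Phi> :: "real^'n \<Rightarrow> real^'n" and \<eta> and xs :: "nat \<Rightarrow> real^'n" and L :: "real^'n^'n" and b
      assume h: "0 < \<delta> \<and> \<delta> < c \<and> distorted_diffeo \<delta> \<Phi> \<and> 0 < \<eta> \<and> \<eta> < 1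
         \<and> (\<forall>i\<le>CARD('n). \<forall>j\<le>CARD('n). dist (xs i) (xs j) \<le> 1)
         \<and> simplex_vol xs \<ge> \<eta> ^ CARD('n)
         \<and> \<delta> < c' * \<eta> ^ CARD('n)
         \<and> (\<forall>i\<le>CARD('n). L *v xs i + b = \<Phi> (xs i))"
      obtain Q where Q: "orthogonal_matrix Q"
        "\<forall>x. norm (x - xs 0) \<le> 2 \<longrightarrow> norm (\<Phi> x - \<Phi> (xs 0) - Q *v (x - xs 0)) \<le> Cc * \<delta> * 2"
        "det Q > 0 \<longleftrightarrow> det (jac \<Phi> (xs 0)) > 0"
        using coreC[of \<delta> \<Phi> 2 "xs 0"] h by auto
      define t0 where "t0 = Cc * \<delta> * 2"
      have t0: "t0 > 0" unfolding t0_def using Ccpos h by simp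
      have dst: "\<forall>i\<le>CARD('n). norm (xs i - xs 0) \<le> 1"
        using h by (metis dist_norm le0)
      have err: "\<forall>i\<le>CARD('n). norm ((L - Q) *v (xs i - xs 0)) \<le> t0"
      proof (intro allI impI)
        fix i assume i: "i \<le> CARD('n)"
        have Li: "L *v xs i + b = \<Phi> (xs i)" "L *v xs 0 + b = \<Phi> (xs 0)" using h i by auto
        have "(L - Q) *v (xs i - xs 0) = \<Phi> (xs i) - \<Phi> (xs 0) - Q *v (xs i - xs 0)"
        proof -
          have e: "L *v xs i = \<Phi> (xs i) - b" "L *v xs 0 = \<Phi> (xs 0) - b"
            using Li by (simp_all add: eq_diff_eq)
          have "L *v (xs i - xs 0) = \<Phi> (xs i) - \<Phi> (xs 0)"
            by (simp add: matrix_vector_mult_diff_distrib e)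
          then show ?thesis by (simp add: matrix_vector_mult_diff_rdistrib)
        qed
        moreover have "norm (xs i - xs 0) \<le> 2" using dst i by fastforce
        ultimately show "norm ((L - Q) *v (xs i - xs 0)) \<le> t0" using Q(2) unfolding t0_def by simp
      qed
      have vol: "simplex_vol xs \<ge> \<eta> ^ CARD('n)" "\<delta> < c' * \<eta> ^ CARD('n)" using h by auto
      have bound: "4 * t0 * m2 < \<eta> ^ CARD('n)"
      proof -
        have "4 * t0 * m2 = 8 * Cc * m2 * \<delta>" unfolding t0_def by simp
        also have "\<dots> \<le> 8 * Cc * (m2 + 1) * \<delta>" using Ccpos h by (intro mult_right_mono) auto
        also have "\<dots> < 8 * Cc * (m2 + 1) * (c' * \<eta> ^ CARD('n))"
          using vol(2) Ccpos m20 by (intro mult_strict_left_mono) auto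
        also have "\<dots> = \<eta> ^ CARD('n)" unfolding c'_def using Ccpos m20 by simp
        finally show ?thesis .
      qed
      let ?g = "\<lambda>s. det (Q + s *\<^sub>R (L - Q))"
      have cont: "continuous_on {0..1} ?g"
        by (rule continuous_on_det) (auto intro!: continuous_intros)
      have nz: "\<forall>s\<in>{0..1}. ?g s \<noteq> 0"
      proof
        fix s :: real assume s: "s \<in> {0..1}"
        show "?g s \<noteq> 0"
        proof
          assume "?g s = 0"
          then have "simplex_vol xs \<le> 4 * t0 * m2"
            using nondeg[OF Q(1) t0 err dst] s unfolding m2_def by auto
          then show False using vol(1) bound by linarith
        qed
      qed
      have "?g 0 > 0 \<longleftrightarrow> ?g 1 > 0" by (rule sign_const[OF _ cont nz]) simp
      then have "det Q > 0 \<longleftrightarrow> det L > 0" by simp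
      then show "proper_diffeo \<Phi> \<longleftrightarrow> det L > 0"
        using Q(3) proper_iff[of \<delta> \<Phi> "xs 0"] h by blast
    qed
  show ?thesis using partA partB by blast
qed



end
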